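(* Let $\delta\in(0,1)$ and assume every simplex of the triangulation $\mathcal T_h$ is non-obtuse (all dihedral angles $\le\pi/2$). Then for all $\mathbb B_h\in\mathcal W_h$ and all $K\in\mathcal T_h$, $$-\big(\nabla\mathbb B_h,\nabla\mathcal I_h\beta_\delta^{-1}(\mathbb B_h)\big)_{L^2(K)}\ \ge\ \frac1d\,\|\nabla\mathcal I_h\operatorname{tr}\ln\beta_\delta(\mathbb B_h)\|_{L^2(K)}^2=\frac1d\,\|\nabla\mathcal I_h\operatorname{tr}\ln\beta_\delta^{-1}(\mathbb B_h)\|_{L^2(K)}^2.$$
   Context: $\mathcal T_h$ is a conforming triangulation of a polyhedral domain $\Omega\subset\mathbb R^d$, $d\in\{2,3\}$, into simplices. $\mathcal W_h$ is the space of continuous functions $\overline\Omega\to\mathbb R^{d\times d}_{\mathrm S}$ (symmetric matrices) affine on each simplex; $\mathcal I_h$ is the nodal piecewise-linear interpolation at the mesh vertices (componentwise for matrices). For symmetric matrices, scalar functions act via the spectral decomposition; $\beta_\delta(s)=\max\{s,\delta\}$ and $\beta_\delta^{-1}(\mathbb B)$ denotes the matrix inverse of $\beta_\delta(\mathbb B)$. $(\nabla\mathbb A,\nabla\mathbb B)_{L^2(K)}=\int_K\sum_k\partial_{x_k}\mathbb A:\partial_{x_k}\mathbb B\,dx$. *)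

theory Defs
  imports "HOL-Analysis.Analysis"
begin

text \<open>Vertices of a simplex in R^d (d = CARD('n)) are indexed by 0..d.\<close>

definition simplex_hull :: "(nat \<Rightarrow> real^'n) \<Rightarrow> (real^'n) set" where
  "simplex_hull v = convex hull (v ` {0..CARD('n)})"

definition bary :: "(nat \<Rightarrow> real^'n) \<Rightarrow> real^'n \<Rightarrow> nat \<Rightarrow> real" where
  "bary v x = (THE u. (\<forall>i. CARD('n) < i \<longrightarrow> u i = 0) \<and> sum u {0..CARD('n)} = 1
                  \<and> (\<Sum>i=0..CARD('n). u i *\<^sub>R v i) = x)"

text \<open>Nodal P1 interpolation on the simplex of the nodal values g 0, ..., g d
  (extended affinely to all of R^d).\<close>
definition p1_interp :: "(nat \<Rightarrow> real^'n) \<Rightarrow> (nat \<Rightarrow> 'b::real_vector) \<Rightarrow> real^'n \<Rightarrow> 'b" where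
  "p1_interp v g x = (\<Sum>i=0..CARD('n). bary v x i *\<^sub>R g i)"

definition pd :: "(real^'n \<Rightarrow> 'b::real_normed_vector) \<Rightarrow> real^'n \<Rightarrow> 'n \<Rightarrow> 'b" where
  "pd f x k = frechet_derivative f (at x) (axis k 1)"

text \<open>Dihedral angle between the facets opposite vertices i and j (i \<noteq> j):
  the angle between the components of v i - v k and v j - v k orthogonal to the
  ridge spanned by the remaining vertices (k one of them). For d = 2 this is the
  interior angle of the triangle at the remaining vertex.\<close>
definition dihedral_angle :: "(nat \<Rightarrow> real^'n) \<Rightarrow> nat \<Rightarrow> nat \<Rightarrow> real" where
  "dihedral_angle v i j =
     (let R = {0..CARD('n)} - {i, j};
          k = Min R;
          S = span ((\<lambda>l. v l - v k) ` R);
          wi = (v i - v k) - closest_point S (v i - v k);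
          wj = (v j - v k) - closest_point S (v j - v k)
      in arccos ((wi \<bullet> wj) / (norm wi * norm wj)))"

definition nonobtuse_simplex :: "(nat \<Rightarrow> real^'n) \<Rightarrow> bool" where
  "nonobtuse_simplex v \<longleftrightarrow>
     (\<forall>i j. i \<le> CARD('n) \<and> j \<le> CARD('n) \<and> i \<noteq> j \<longrightarrow> dihedral_angle v i j \<le> pi / 2)"

definition diag_mat :: "real^'n \<Rightarrow> real^'n^'n" where
  "diag_mat lam = (\<chi> i j. if i = j then lam $ i else 0)"

definition mat_fun :: "(real \<Rightarrow> real) \<Rightarrow> real^'n^'n \<Rightarrow> real^'n^'n" where
  "mat_fun f A = (SOME M. \<exists>Q lam. orthogonal_matrix Q \<and> A = Q ** diag_mat lam ** transpose Q
                        \<and> M = Q ** diag_mat (\<chi> i. f (lam $ i)) ** transpose Q)"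

definition beta :: "real \<Rightarrow> real \<Rightarrow> real" where
  "beta \<delta> s = max s \<delta>"

end

theory Submission
  imports Defs
begin

lemma sym_inner:
  fixes A :: "real^'n^'n"
  assumes "transpose A = A"
  shows "(A *v x) \<bullet> y = x \<bullet> (A *v y)"
  by (metis assms dot_lmul_matrix transpose_matrix_vector)

lemma eig_exists:
  fixes A :: "real^'n^'n"
  assumes sym: "transpose A = A" and V: "subspace V" and inv: "\<And>x. x \<in> V \<Longrightarrow> A *v x \<in> V"
    and ne: "x0 \<in> V" "x0 \<noteq> 0"
  shows "\<exists>u\<in>V. norm u = 1 \<and> A *v u = (u \<bullet> (A *v u)) *\<^sub>R u"
proof -
  let ?S = "sphere 0 1 \<inter> V"
  have cS: "compact ?S"
    by (simp add: V closed_subspace compact_Int_closed)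
  have "x0 /\<^sub>R norm x0 \<in> ?S" using ne V by (simp add: subspace_scale)
  hence neS: "?S \<noteq> {}" by blast
  have cont: "continuous_on ?S (\<lambda>x. x \<bullet> (A *v x))"
    by (intro continuous_intros linear_continuous_on matrix_vector_mul_bounded_linear)
  obtain u where u: "u \<in> ?S" "\<And>y. y \<in> ?S \<Longrightarrow> y \<bullet> (A *v y) \<le> u \<bullet> (A *v u)"
    using continuous_attains_sup[OF cS neS cont] by blast
  define m where "m = u \<bullet> (A *v u)"
  have un: "u \<in> V" "norm u = 1" using u by auto
  have bound: "y \<bullet> (A *v y) \<le> m * (y \<bullet> y)" if "y \<in> V" for y
  proof cases
    assume "y = 0" then show ?thesis by simp
  next
    assume y0: "y \<noteq> 0"
    let ?z = "y /\<^sub>R norm y"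
    have zS: "?z \<in> ?S" using that y0 V by (simp add: subspace_scale)
    have "?z \<bullet> (A *v ?z) \<le> m" using u(2)[OF zS] unfolding m_def .
    moreover have "?z \<bullet> (A *v ?z) = (y \<bullet> (A *v y)) / (norm y)^2"
      using y0 by (simp add: matrix_vector_mult_scaleR power2_eq_square field_simps)
    moreover have "y \<bullet> y = (norm y)^2" by (simp add: power2_norm_eq_inner)
    moreover have "norm y > 0" using y0 by simp
    ultimately show ?thesis by (simp add: divide_le_eq mult.commute)
  qed
  define w where "w = A *v u - m *\<^sub>R u"
  have wV: "w \<in> V" using inv un V by (simp add: w_def subspace_diff subspace_scale)
  have uu: "u \<bullet> u = 1" using un by (simp add: norm_eq_1)
  have Auu: "(A *v u) \<bullet> u = m" unfolding m_def by (rule inner_commute)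
  have wu: "w \<bullet> u = 0" using uu Auu by (simp add: w_def inner_diff_left)
  have wAu: "w \<bullet> (A *v u) = w \<bullet> w"
  proof -
    have "A *v u = w + m *\<^sub>R u" by (simp add: w_def)
    thus ?thesis using wu by (simp add: inner_add_right)
  qed
  define c where "c = w \<bullet> w"
  define e where "e = w \<bullet> (A *v w) - m * c"
  have key: "2 * t * c + t^2 * e \<le> 0" for t
  proof -
    have yV: "u + t *\<^sub>R w \<in> V" using un wV V by (simp add: subspace_add subspace_scale)
    have uAw: "u \<bullet> (A *v w) = c"
      using sym_inner[OF sym, of u w] wAu by (simp add: c_def inner_commute)
    have "(u + t *\<^sub>R w) \<bullet> (A *v (u + t *\<^sub>R w)) = m + 2 * t * c + t^2 * (w \<bullet> (A *v w))"
      using uAw wAu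
      by (simp add: matrix_vector_right_distrib matrix_vector_mult_scaleR inner_add_left inner_add_right
            m_def c_def power2_eq_square algebra_simps)
    moreover have "(u + t *\<^sub>R w) \<bullet> (u + t *\<^sub>R w) = 1 + t^2 * c"
      using uu wu by (simp add: inner_add_left inner_add_right c_def power2_eq_square inner_commute)
    ultimately show ?thesis using bound[OF yV] by (simp add: e_def algebra_simps power2_eq_square)
  qed
  define q where "q = \<bar>e\<bar> + 1"
  have q: "q > 0" by (simp add: q_def)
  have "(2 * (c/q) * c + (c/q)^2 * e) * q^2 = c^2 * (2*q + e)"
    using q by (simp add: field_simps power2_eq_square)
  moreover have "(2 * (c/q) * c + (c/q)^2 * e) * q^2 \<le> 0"
    using key[of "c/q"] by (simp add: mult_nonpos_nonneg)
  ultimately have "c^2 * (2*q + e) \<le> 0" by simp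
  moreover have "2*q + e > 0" by (simp add: q_def) 
  ultimately have "c^2 \<le> 0" by (simp add: mult_le_0_iff)
  hence "c = 0" by simp
  hence "w = 0" by (simp add: c_def)
  hence "A *v u = m *\<^sub>R u" by (simp add: w_def)
  thus ?thesis using un m_def by blast
qed

lemma eig_set:
  fixes A :: "real^'n^'n"
  assumes sym: "transpose A = A"
  shows "k \<le> CARD('n) \<Longrightarrow> \<exists>B. finite B \<and> card B = k \<and> pairwise orthogonal B \<and>
            (\<forall>b\<in>B. norm b = 1 \<and> A *v b = (b \<bullet> (A *v b)) *\<^sub>R b)"
proof (induction k)
  case 0 show ?case by (intro exI[of _ "{}"]) auto
next
  case (Suc k)
  then obtain B where B: "finite B" "card B = k" "pairwise orthogonal B"
     "\<forall>b\<in>B. norm b = 1 \<and> A *v b = (b \<bullet> (A *v b)) *\<^sub>R b" by auto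
  have "dim B \<le> card B" using dim_le_card[OF span_superset B(1)] .
  hence "dim B < DIM(real^'n)" using B Suc.prems by simp
  then obtain x where x: "x \<noteq> 0" "\<And>y. y \<in> span B \<Longrightarrow> orthogonal x y"
    using orthogonal_to_subspace_exists by blast
  let ?V = "{y. \<forall>b\<in>B. orthogonal b y}"
  have V: "subspace ?V" by (rule subspace_orthogonal_to_vectors)
  have xV: "x \<in> ?V" using x by (auto simp: span_base orthogonal_commute)
  have inv: "A *v y \<in> ?V" if "y \<in> ?V" for y
  proof (clarsimp)
    fix b assume b: "b \<in> B"
    have "b \<bullet> (A *v y) = (A *v b) \<bullet> y" using sym_inner[OF sym, of b y] by simp
    also have "\<dots> = (b \<bullet> (A *v b)) * (b \<bullet> y)" using B(4) b by (metis inner_scaleR_left)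
    also have "\<dots> = 0" using that b by (simp add: orthogonal_def)
    finally show "orthogonal b (A *v y)" by (simp add: orthogonal_def)
  qed
  obtain u where u: "u \<in> ?V" "norm u = 1" "A *v u = (u \<bullet> (A *v u)) *\<^sub>R u"
    using eig_exists[OF sym V inv xV x(1)] by blast
  have uB: "u \<notin> B"
  proof
    assume "u \<in> B" hence "orthogonal u u" using u(1) by auto
    thus False using u(2) by (simp add: orthogonal_def)
  qed
  show ?case
  proof (intro exI[of _ "insert u B"] conjI)
    show "finite (insert u B)" using B by simp
    show "card (insert u B) = Suc k" using B uB by simp
    show "pairwise orthogonal (insert u B)"
      using B(3) u(1) by (auto simp: pairwise_insert orthogonal_commute)
    show "\<forall>b\<in>insert u B. norm b = 1 \<and> A *v b = (b \<bullet> (A *v b)) *\<^sub>R b" using B u by auto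
  qed
qed

lemma spectral:
  fixes A :: "real^'n^'n"
  assumes sym: "transpose A = A"
  shows "\<exists>Q lam. orthogonal_matrix Q \<and> A = Q ** diag_mat lam ** transpose Q"
proof -
  obtain B where B: "finite B" "card B = CARD('n)" "pairwise orthogonal B"
     "\<forall>b\<in>B. norm b = 1 \<and> A *v b = (b \<bullet> (A *v b)) *\<^sub>R b"
    using eig_set[OF sym, of "CARD('n)"] by auto
  obtain f where f: "bij_betw f (UNIV::'n set) B" using finite_same_card_bij[of "UNIV::'n set" B] B by auto
  define Q where "Q = (\<chi> i j. f j $ i)"
  define lam where "lam = (\<chi> j. f j \<bullet> (A *v f j))"
  have fB: "f i \<in> B" for i using f by (auto simp: bij_betw_def)
  have nf: "norm (f i) = 1" for i using B(4) fB by auto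
  have ef: "A *v f j = lam $ j *\<^sub>R f j" for j using B(4) fB by (simp add: lam_def)
  have orth: "orthogonal (f i) (f j)" if "i \<noteq> j" for i j
    using B(3) f that by (auto simp: pairwise_def bij_betw_def inj_on_def)
  have oQ: "orthogonal_matrix Q"
    by (simp add: orthogonal_matrix_orthonormal_columns column_def Q_def nf orth)
  have AQ: "A ** Q = Q ** diag_mat lam"
  proof -
    have "(A ** Q) $ i $ j = (Q ** diag_mat lam) $ i $ j" for i j
    proof -
      have "(A ** Q) $ i $ j = (A *v f j) $ i"
        by (simp add: matrix_matrix_mult_def matrix_vector_mult_def Q_def)
      also have "\<dots> = lam $ j * f j $ i" by (simp add: ef)
      also have "\<dots> = (Q ** diag_mat lam) $ i $ j"
        by (simp add: matrix_matrix_mult_def diag_mat_def Q_def if_distrib cong: if_cong)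
      finally show ?thesis .
    qed
    thus ?thesis by (simp add: vec_eq_iff)
  qed
  have "A = A ** (Q ** transpose Q)" using oQ by (simp add: orthogonal_matrix_def)
  also have "\<dots> = Q ** diag_mat lam ** transpose Q" by (simp add: matrix_mul_assoc AQ)
  finally show ?thesis using oQ by blast
qed

lemma sum3_swap:
  "(\<Sum>a\<in>A. \<Sum>b\<in>B. \<Sum>k\<in>C. f a b k) = (\<Sum>k\<in>C. \<Sum>a\<in>A. \<Sum>b\<in>B. f a b k)"
proof -
  have "(\<Sum>a\<in>A. \<Sum>b\<in>B. \<Sum>k\<in>C. f a b k) = (\<Sum>a\<in>A. \<Sum>k\<in>C. \<Sum>b\<in>B. f a b k)"
    by (rule sum.cong[OF refl], rule sum.swap)
  also have "\<dots> = (\<Sum>k\<in>C. \<Sum>a\<in>A. \<Sum>b\<in>B. f a b k)" by (rule sum.swap)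
  finally show ?thesis .
qed

lemma qdq_entry:
  "(Q ** diag_mat lam ** transpose Q) $ a $ b = (\<Sum>k\<in>UNIV. Q$a$k * lam$k * Q$b$k)"
  by (simp add: matrix_matrix_mult_def diag_mat_def transpose_def if_distrib sum.delta' cong: if_cong)

lemma orth_cols:
  fixes P :: "real^'n^'n"
  assumes "orthogonal_matrix P"
  shows "(\<Sum>a\<in>UNIV. P$a$i * P$a$k) = (if i = k then 1 else 0)"
proof -
  have "(transpose P ** P) $ i $ k = mat 1 $ i $ k" using assms by (simp add: orthogonal_matrix_def)
  thus ?thesis by (simp add: matrix_matrix_mult_def transpose_def mat_def)
qed

lemma orth_rows:
  fixes P :: "real^'n^'n"
  assumes "orthogonal_matrix P"
  shows "(\<Sum>a\<in>UNIV. P$i$a * P$k$a) = (if i = k then 1 else 0)"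
proof -
  have "(P ** transpose P) $ i $ k = mat 1 $ i $ k" using assms by (simp add: orthogonal_matrix_def)
  thus ?thesis by (simp add: matrix_matrix_mult_def transpose_def mat_def)
qed

lemma quad_form:
  fixes Q :: "real^'n^'n"
  shows "(\<Sum>a\<in>UNIV. \<Sum>b\<in>UNIV. c$a * (Q ** diag_mat lam ** transpose Q)$a$b * c$b)
   = (\<Sum>k\<in>UNIV. lam$k * (\<Sum>a\<in>UNIV. c$a * Q$a$k)^2)"
proof -
  have "(\<Sum>a\<in>UNIV. \<Sum>b\<in>UNIV. c$a * (Q ** diag_mat lam ** transpose Q)$a$b * c$b)
     = (\<Sum>a\<in>UNIV. \<Sum>b\<in>UNIV. \<Sum>k\<in>UNIV. lam$k * ((c$a * Q$a$k) * (c$b * Q$b$k)))"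
    by (simp add: qdq_entry sum_distrib_left sum_distrib_right mult_ac)
  also have "\<dots> = (\<Sum>k\<in>UNIV. \<Sum>a\<in>UNIV. \<Sum>b\<in>UNIV. lam$k * ((c$a * Q$a$k) * (c$b * Q$b$k)))"
    by (rule sum3_swap)
  also have "\<dots> = (\<Sum>k\<in>UNIV. lam$k * (\<Sum>a\<in>UNIV. c$a * Q$a$k)^2)"
  proof -
    have "(\<Sum>a\<in>UNIV. c$a * Q$a$k)^2 = (\<Sum>a\<in>UNIV. \<Sum>b\<in>UNIV. (c$a * Q$a$k) * (c$b * Q$b$k))" for k
      by (simp add: power2_eq_square sum_product)
    thus ?thesis by (simp add: sum_distrib_left)
  qed
  finally show ?thesis .
qed

lemma frob:
  fixes Q P :: "real^'n^'n"
  shows "(Q ** diag_mat a ** transpose Q) \<bullet> (P ** diag_mat b ** transpose P)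
   = (\<Sum>l\<in>UNIV. b$l * (\<Sum>k\<in>UNIV. a$k * (\<Sum>i\<in>UNIV. P$i$l * Q$i$k)^2))"
proof -
  let ?X = "Q ** diag_mat a ** transpose Q"
  have "?X \<bullet> (P ** diag_mat b ** transpose P)
      = (\<Sum>i\<in>UNIV. \<Sum>j\<in>UNIV. \<Sum>l\<in>UNIV. b$l * (P$i$l * ?X$i$j * P$j$l))"
    by (simp add: inner_vec_def qdq_entry[of P] sum_distrib_left mult_ac)
  also have "\<dots> = (\<Sum>l\<in>UNIV. \<Sum>i\<in>UNIV. \<Sum>j\<in>UNIV. b$l * (P$i$l * ?X$i$j * P$j$l))"
    by (rule sum3_swap)
  also have "\<dots> = (\<Sum>l\<in>UNIV. b$l * (\<Sum>i\<in>UNIV. \<Sum>j\<in>UNIV. (\<chi> i. P$i$l)$i * ?X$i$j * (\<chi> i. P$i$l)$j))"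
    by (simp add: sum_distrib_left)
  also have "\<dots> = (\<Sum>l\<in>UNIV. b$l * (\<Sum>k\<in>UNIV. a$k * (\<Sum>i\<in>UNIV. P$i$l * Q$i$k)^2))"
    by (simp only: quad_form) simp
  finally show ?thesis .
qed

lemma diag_one: "diag_mat (\<chi> i. 1) = (mat 1 :: real^'n^'n)"
  by (simp add: diag_mat_def mat_def vec_eq_iff)

lemma qdq_one:
  fixes Q :: "real^'n^'n"
  assumes "orthogonal_matrix Q"
  shows "Q ** diag_mat (\<chi> i. 1) ** transpose Q = mat 1"
  using assms by (simp add: diag_one orthogonal_matrix_def)

lemma diag_mult: "diag_mat a ** diag_mat b = diag_mat (\<chi> i. (a$i * b$i :: real))"
proof -
  have "(diag_mat a ** diag_mat b)$i$j = (diag_mat (\<chi> i. (a$i * b$i :: real)))$i$j" for i j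
  proof -
    have "(diag_mat a ** diag_mat b)$i$j = (\<Sum>k\<in>UNIV. if k = i then (if i = j then a$i * b$i else 0) else 0)"
      unfolding matrix_matrix_mult_def diag_mat_def by (simp only: vec_lambda_beta) (rule sum.cong, auto)
    also have "\<dots> = (diag_mat (\<chi> i. (a$i * b$i :: real)))$i$j" by (simp add: diag_mat_def)
    finally show ?thesis .
  qed
  thus ?thesis by (simp add: vec_eq_iff)
qed

lemma qdq_mult:
  fixes Q :: "real^'n^'n"
  assumes "orthogonal_matrix Q"
  shows "(Q ** diag_mat a ** transpose Q) ** (Q ** diag_mat b ** transpose Q)
       = Q ** diag_mat (\<chi> i. a$i * b$i) ** transpose Q"
proof -
  have "(Q ** diag_mat a ** transpose Q) ** (Q ** diag_mat b ** transpose Q)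
      = Q ** diag_mat a ** (transpose Q ** Q) ** diag_mat b ** transpose Q"
    by (simp add: matrix_mul_assoc)
  also have "\<dots> = Q ** (diag_mat a ** diag_mat b) ** transpose Q"
    using assms by (simp add: orthogonal_matrix_def matrix_mul_assoc)
  finally show ?thesis by (simp add: diag_mult)
qed

lemma qdq_inv:
  fixes Q :: "real^'n^'n"
  assumes Q: "orthogonal_matrix Q" and a: "\<And>i. a$i \<noteq> 0"
  shows "matrix_inv (Q ** diag_mat a ** transpose Q) = Q ** diag_mat (\<chi> i. 1 / a$i) ** transpose Q"
proof -
  let ?M = "Q ** diag_mat a ** transpose Q" and ?N = "Q ** diag_mat (\<chi> i. 1 / a$i) ** transpose Q"
  have "(\<chi> i. a$i * (\<chi> i. 1 / a$i)$i) = (\<chi> i. (1::real))" using a by (simp add: vec_eq_iff)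
  hence MN: "?M ** ?N = mat 1" using qdq_mult[OF Q] qdq_one[OF Q] by metis
  have "(\<chi> i. (\<chi> i. 1 / a$i)$i * a$i) = (\<chi> i. (1::real))" using a by (simp add: vec_eq_iff)
  hence NM: "?N ** ?M = mat 1" using qdq_mult[OF Q] qdq_one[OF Q] by metis
  have ex: "\<exists>X. ?M ** X = mat 1 \<and> X ** ?M = mat 1" using MN NM by blast
  define X where "X = matrix_inv ?M"
  have X: "?M ** X = mat 1" "X ** ?M = mat 1"
    using someI_ex[OF ex] unfolding X_def matrix_inv_def by auto
  have "X = X ** (?M ** ?N)" by (simp add: MN)
  also have "\<dots> = (X ** ?M) ** ?N" by (simp add: matrix_mul_assoc)
  also have "\<dots> = ?N" by (simp add: X)
  finally show ?thesis by (simp add: X_def)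
qed

lemma qdq_det:
  fixes Q :: "real^'n^'n"
  assumes Q: "orthogonal_matrix Q"
  shows "det (Q ** diag_mat a ** transpose Q) = (\<Prod>i\<in>UNIV. a$i)"
proof -
  have "det Q * det Q = 1" using det_orthogonal_matrix[OF Q] by auto
  moreover have "det (diag_mat a) = (\<Prod>i\<in>UNIV. a$i)"
    by (subst det_diagonal) (auto simp: diag_mat_def)
  ultimately show ?thesis by (simp add: det_mul det_transpose)
qed

lemma qdq_trace:
  fixes Q :: "real^'n^'n"
  assumes Q: "orthogonal_matrix Q"
  shows "trace (Q ** diag_mat a ** transpose Q) = (\<Sum>i\<in>UNIV. a$i)"
proof -
  have "trace (Q ** diag_mat a ** transpose Q) = (\<Sum>i\<in>UNIV. \<Sum>k\<in>UNIV. a$k * (Q$i$k * Q$i$k))"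
    by (simp add: trace_def qdq_entry mult_ac)
  also have "\<dots> = (\<Sum>k\<in>UNIV. a$k * (\<Sum>i\<in>UNIV. Q$i$k * Q$i$k))"
    by (subst sum.swap) (simp add: sum_distrib_left)
  also have "\<dots> = (\<Sum>k\<in>UNIV. a$k)" by (simp add: orth_cols[OF Q])
  finally show ?thesis .
qed

lemma transpose_entry: "(transpose M)$i$j = M$j$i"
  by (simp add: transpose_def)

lemma qdq_sym: "transpose (Q ** diag_mat a ** transpose Q) = (Q ** diag_mat a ** transpose Q :: real^'n^'n)"
  unfolding vec_eq_iff transpose_entry qdq_entry by (simp add: mult_ac)

lemma mf_spec:
  fixes A :: "real^'n^'n"
  assumes "transpose A = A"
  shows "\<exists>Q lam. orthogonal_matrix Q \<and> A = Q ** diag_mat lam ** transpose Q \<and>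
            mat_fun f A = Q ** diag_mat (\<chi> i. f (lam $ i)) ** transpose Q"
proof -
  obtain Q lam where "orthogonal_matrix Q" "A = Q ** diag_mat lam ** transpose Q"
    using spectral[OF assms] by blast
  hence ex: "\<exists>M. \<exists>Q lam. orthogonal_matrix Q \<and> A = Q ** diag_mat lam ** transpose Q
                        \<and> M = Q ** diag_mat (\<chi> i. f (lam $ i)) ** transpose Q" by blast
  show ?thesis using someI_ex[OF ex] unfolding mat_fun_def by blast
qed

lemma sum_delta_mid: "(\<Sum>b\<in>(UNIV::'n::finite set). x * (if a = b then 1 else 0) * y b) = x * (y a :: real)"
proof -
  have "\<And>b. x * (if a = b then 1 else 0) * y b = (if b = a then x * y a else 0)" by auto
  thus ?thesis by simp
qed

lemma sum_if_sq: "(\<Sum>k\<in>(UNIV::'n::finite set). f k * (if i = k then 1 else 0)^2) = (f i::real)"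
proof -
  have "\<And>k. f k * (if i = k then 1 else 0)^2 = (if k = i then f i else 0)" by auto
  thus ?thesis by simp
qed

lemma qf_one:
  fixes Q P :: "real^'n^'n"
  assumes Q: "orthogonal_matrix Q" and P: "orthogonal_matrix P"
  shows "(\<Sum>k\<in>UNIV. (\<Sum>a\<in>UNIV. P$a$i * Q$a$k)^2) = 1"
proof -
  have "(\<Sum>k\<in>UNIV. (\<Sum>a\<in>UNIV. P$a$i * Q$a$k)^2)
      = (\<Sum>k\<in>UNIV. (\<chi> i. (1::real))$k * (\<Sum>a\<in>UNIV. (\<chi> a. P$a$i)$a * Q$a$k)^2)" by simp
  also have "\<dots> = (\<Sum>a\<in>UNIV. \<Sum>b\<in>UNIV. (\<chi> a. P$a$i)$a * (mat 1 :: real^'n^'n)$a$b * (\<chi> a. P$a$i)$b)"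
    by (simp only: quad_form[symmetric] qdq_one[OF Q])
  also have "\<dots> = (\<Sum>a\<in>UNIV. P$a$i * P$a$i)"
    by (simp add: mat_def sum_delta_mid)
  also have "\<dots> = 1" by (simp add: orth_cols[OF P])
  finally show ?thesis .
qed

lemma qdq_pos:
  fixes Q P :: "real^'n^'n"
  assumes Q: "orthogonal_matrix Q" and P: "orthogonal_matrix P"
    and eq: "Q ** diag_mat mu ** transpose Q = P ** diag_mat lam ** transpose P"
    and mu: "\<And>k. mu$k > 0"
  shows "lam$i > 0"
proof -
  define c where "c = (\<chi> a. P$a$i)"
  define s where "s k = (\<Sum>a\<in>UNIV. c$a * Q$a$k)^2" for k
  have cP: "(\<Sum>a\<in>UNIV. c$a * P$a$k) = (if i = k then 1 else 0)" for k
    using orth_cols[OF P, of i k] by (simp add: c_def)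
  have "lam$i = (\<Sum>k\<in>UNIV. lam$k * (\<Sum>a\<in>UNIV. c$a * P$a$k)^2)"
    by (simp only: cP sum_if_sq)
  also have "\<dots> = (\<Sum>k\<in>UNIV. mu$k * s k)"
    by (simp only: quad_form[symmetric] eq[symmetric]) (simp add: quad_form s_def)
  finally have li: "lam$i = (\<Sum>k\<in>UNIV. mu$k * s k)" .
  have ssum: "(\<Sum>k\<in>UNIV. s k) = 1" using qf_one[OF Q P, of i] by (simp add: s_def c_def)
  obtain k where k: "s k \<noteq> 0"
  proof (rule ccontr)
    assume "\<not> thesis"
    hence "\<And>k. s k = 0" using that by blast
    thus False using ssum by simp
  qed
  have s0: "s k \<ge> 0" for k by (simp add: s_def)
  have "s k > 0" using k s0[of k] by simp
  hence "0 < (\<Sum>k\<in>UNIV. mu$k * s k)"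
    by (intro sum_pos2[of UNIV k]) (auto simp: mu less_imp_le s0)
  thus ?thesis using li by simp
qed

lemma trace_ln:
  fixes P :: "real^'n^'n"
  assumes P: "orthogonal_matrix P" and mu: "\<And>k. mu$k > 0"
  shows "trace (mat_fun ln (P ** diag_mat mu ** transpose P)) = (\<Sum>k\<in>UNIV. ln (mu$k))"
proof -
  let ?M = "P ** diag_mat mu ** transpose P"
  obtain Q lam where Q: "orthogonal_matrix Q" and eq: "?M = Q ** diag_mat lam ** transpose Q"
     and mf: "mat_fun ln ?M = Q ** diag_mat (\<chi> i. ln (lam $ i)) ** transpose Q"
    using mf_spec[where f=ln, OF qdq_sym[of P mu]] by blast
  have lp: "lam$i > 0" for i using qdq_pos[OF P Q eq mu] .
  have "trace (mat_fun ln ?M) = (\<Sum>i\<in>UNIV. ln (lam$i))" by (simp add: mf qdq_trace[OF Q])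
  also have "\<dots> = ln (\<Prod>i\<in>UNIV. lam$i)" using lp by (simp add: ln_prod less_imp_neq[symmetric])
  also have "(\<Prod>i\<in>UNIV. lam$i) = det ?M" using qdq_det[OF Q] eq by simp
  also have "det ?M = (\<Prod>i\<in>UNIV. mu$i)" by (rule qdq_det[OF P])
  also have "ln (\<Prod>i\<in>UNIV. mu$i) = (\<Sum>i\<in>UNIV. ln (mu$i))"
    using mu by (simp add: ln_prod less_imp_neq[symmetric])
  finally show ?thesis .
qed

lemma ln_le_aux:
  fixes t :: real assumes "t \<ge> 1" shows "2 * ln t \<le> t - 1 / t"
proof -
  let ?f = "\<lambda>x::real. x - 1 / x - 2 * ln x"
  have "?f 1 \<le> ?f t"
  proof (rule DERIV_nonneg_imp_nondecreasing[OF assms])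
    fix x :: real assume x: "1 \<le> x" "x \<le> t"
    have "DERIV ?f x :> 1 + 1 / x^2 - 2 / x"
      using x by (auto intro!: derivative_eq_intros simp: field_simps power2_eq_square)
    moreover have "1 + 1 / x^2 - 2 / x = (1 - 1/x)^2"
      using x by (simp add: field_simps power2_eq_square)
    ultimately show "\<exists>y. DERIV ?f x :> y \<and> y \<ge> 0" by auto
  qed
  thus ?thesis by simp
qed

lemma ln_ineq:
  fixes a b :: real
  assumes "a > 0" "b > 0"
  shows "(ln a - ln b)^2 \<le> (a - b)^2 / (a*b)"
proof -
  have main: "(ln a - ln b)^2 \<le> (a - b)^2 / (a*b)" if ab: "a \<ge> b" "a > 0" "b > 0" for a b :: real
  proof -
    define t where "t = sqrt (a / b)"
    have t1: "t \<ge> 1" using ab by (simp add: t_def)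
    have tt: "t * t = a / b" using ab by (simp add: t_def)
    have "ln a - ln b = ln (a / b)" using ab by (simp add: ln_div)
    also have "\<dots> = ln (t * t)" using tt by simp
    also have "\<dots> = 2 * ln t" using t1 by (simp add: ln_mult)
    finally have l: "ln a - ln b = 2 * ln t" .
    have l0: "0 \<le> 2 * ln t" using t1 by simp
    have "(2 * ln t)^2 \<le> (t - 1/t)^2"
      by (rule power_mono[OF ln_le_aux[OF t1] l0])
    also have "(t - 1/t)^2 = (a - b)^2 / (a*b)"
    proof -
      have "(t - 1/t)^2 = t*t + 1/(t*t) - 2" using t1 by (simp add: field_simps power2_eq_square)
      also have "\<dots> = a/b + b/a - 2" using tt by simp
      also have "\<dots> = (a - b)^2 / (a*b)" using ab by (simp add: field_simps power2_eq_square)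
      finally show ?thesis .
    qed
    finally show ?thesis using l by simp
  qed
  show ?thesis
  proof (cases "a \<ge> b")
    case True thus ?thesis using main assms by blast
  next
    case False
    hence "(ln b - ln a)^2 \<le> (b - a)^2 / (b*a)" using main assms by simp
    thus ?thesis by (simp add: power2_commute mult.commute)
  qed
qed

lemma scalar_ineq:
  fixes \<delta> x y :: real
  assumes d: "\<delta> > 0"
  shows "(ln (beta \<delta> x) - ln (beta \<delta> y))^2 \<le> - ((x - y) * (1 / beta \<delta> x - 1 / beta \<delta> y))"
proof -
  define bx where "bx = beta \<delta> x"
  define "by" where "by = beta \<delta> y"
  have bx: "bx > 0" "bx = max x \<delta>" using d by (auto simp: bx_def beta_def)
  have by': "by > 0" "by = max y \<delta>" using d by (auto simp: by_def beta_def)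
  have "(bx - by)^2 \<le> (x - y) * (bx - by)"
  proof (cases "x \<ge> \<delta>"; cases "y \<ge> \<delta>")
    assume "x \<ge> \<delta>" "y \<ge> \<delta>" thus ?thesis using bx by' by (simp add: power2_eq_square)
  next
    assume a: "x \<ge> \<delta>" "\<not> y \<ge> \<delta>"
    hence e: "bx = x" "by = \<delta>" using bx by' by auto
    have "(x - \<delta>) * (x - \<delta>) \<le> (x - y) * (x - \<delta>)"
      by (rule mult_right_mono) (use a in auto)
    thus ?thesis using e by (simp add: power2_eq_square)
  next
    assume a: "\<not> x \<ge> \<delta>" "y \<ge> \<delta>"
    hence e: "bx = \<delta>" "by = y" using bx by' by auto
    have "(\<delta> - y) * (\<delta> - y) \<le> (x - y) * (\<delta> - y)"
      by (rule mult_right_mono_neg) (use a in auto)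
    thus ?thesis using e by (simp add: power2_eq_square)
  next
    assume a: "\<not> x \<ge> \<delta>" "\<not> y \<ge> \<delta>"
    hence e: "bx = \<delta>" "by = \<delta>" using bx by' by auto
    thus ?thesis by simp
  qed
  hence "(bx - by)^2 / (bx * by) \<le> (x - y) * (bx - by) / (bx * by)"
    using bx by' by (simp add: divide_right_mono)
  also have "\<dots> = - ((x - y) * (1 / bx - 1 / by))" using bx by' by (simp add: field_simps)
  finally show ?thesis using ln_ineq[OF bx(1) by'(1)] unfolding bx_def by_def by linarith
qed

lemma wcs:
  fixes w z :: "'a \<Rightarrow> real"
  assumes w: "\<And>x. x \<in> S \<Longrightarrow> w x \<ge> 0"
  shows "(\<Sum>x\<in>S. w x * z x)^2 \<le> (\<Sum>x\<in>S. w x) * (\<Sum>x\<in>S. w x * (z x)^2)"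
proof -
  have "(\<Sum>x\<in>S. w x * z x) = (\<Sum>x\<in>S. sqrt (w x) * (sqrt (w x) * z x))"
    using w by (intro sum.cong) (auto simp: mult.assoc[symmetric])
  hence "(\<Sum>x\<in>S. w x * z x)^2 \<le> (\<Sum>x\<in>S. (sqrt (w x))^2) * (\<Sum>x\<in>S. (sqrt (w x) * z x)^2)"
    using Cauchy_Schwarz_ineq_sum by metis
  also have "\<dots> = (\<Sum>x\<in>S. w x) * (\<Sum>x\<in>S. w x * (z x)^2)"
    using w by (simp add: power_mult_distrib)
  finally show ?thesis .
qed

lemma pair_ineq:
  fixes B C :: "real^'n^'n"
  assumes sB: "transpose B = B" and sC: "transpose C = C" and d: "\<delta> > 0"
  shows "(trace (mat_fun ln (mat_fun (beta \<delta>) B)) - trace (mat_fun ln (mat_fun (beta \<delta>) C)))^2 / real CARD('n)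
     \<le> - ((B - C) \<bullet> (matrix_inv (mat_fun (beta \<delta>) B) - matrix_inv (mat_fun (beta \<delta>) C)))"
proof -
  define bl where "bl lam = (\<chi> i. beta \<delta> (lam$i))" for lam :: "real^'n"
  obtain P lam where P: "orthogonal_matrix P" and Bd: "B = P ** diag_mat lam ** transpose P"
     and bB: "mat_fun (beta \<delta>) B = P ** diag_mat (bl lam) ** transpose P"
    using mf_spec[OF sB, of "beta \<delta>"] unfolding bl_def by blast
  obtain Q mu where Q: "orthogonal_matrix Q" and Cd: "C = Q ** diag_mat mu ** transpose Q"
     and bC: "mat_fun (beta \<delta>) C = Q ** diag_mat (bl mu) ** transpose Q"
    using mf_spec[OF sC, of "beta \<delta>"] unfolding bl_def by blast
  have blp: "(bl x)$k > 0" for x k using d by (simp add: bl_def beta_def)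
  have Bi: "matrix_inv (mat_fun (beta \<delta>) B) = P ** diag_mat (\<chi> i. 1 / (bl lam)$i) ** transpose P"
    unfolding bB by (rule qdq_inv[OF P]) (simp add: blp less_imp_neq[symmetric])
  have Ci: "matrix_inv (mat_fun (beta \<delta>) C) = Q ** diag_mat (\<chi> i. 1 / (bl mu)$i) ** transpose Q"
    unfolding bC by (rule qdq_inv[OF Q]) (simp add: blp less_imp_neq[symmetric])
  have tB: "trace (mat_fun ln (mat_fun (beta \<delta>) B)) = (\<Sum>k\<in>UNIV. ln ((bl lam)$k))"
    unfolding bB by (rule trace_ln[OF P blp])
  have tC: "trace (mat_fun ln (mat_fun (beta \<delta>) C)) = (\<Sum>k\<in>UNIV. ln ((bl mu)$k))"
    unfolding bC by (rule trace_ln[OF Q blp])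
  define A where "A k l = (\<Sum>i\<in>UNIV. P$i$k * Q$i$l)^2" for k l
  have A0: "A k l \<ge> 0" for k l by (simp add: A_def)
  have Arow: "(\<Sum>l\<in>UNIV. A k l) = 1" for k using qf_one[OF Q P, of k] by (simp add: A_def)
  have Acol: "(\<Sum>k\<in>UNIV. A k l) = 1" for l using qf_one[OF P Q, of l] by (simp add: A_def mult.commute)
  have AQP: "(\<Sum>i\<in>UNIV. Q$i$l * P$i$k)^2 = A k l" for k l by (simp add: A_def mult.commute)
  have APQ: "(\<Sum>i\<in>UNIV. P$i$k * Q$i$l)^2 = A k l" for k l by (simp add: A_def)
  have PP: "(\<Sum>i\<in>UNIV. P$i$l * P$i$k)^2 = (if k = l then 1 else 0)" for k l
    using orth_cols[OF P, of l k] by auto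
  have QQ: "(\<Sum>i\<in>UNIV. Q$i$l * Q$i$k)^2 = (if k = l then 1 else 0)" for k l
    using orth_cols[OF Q, of l k] by auto
  define Binv where "Binv = matrix_inv (mat_fun (beta \<delta>) B)"
  define Cinv where "Cinv = matrix_inv (mat_fun (beta \<delta>) C)"
  let ?bl = "\<lambda>k. (bl lam)$k" and ?bm = "\<lambda>k. (bl mu)$k"
  have Binv_eq: "Binv = P ** diag_mat (\<chi> i. 1 / (bl lam)$i) ** transpose P" unfolding Binv_def by (rule Bi)
  have Cinv_eq: "Cinv = Q ** diag_mat (\<chi> i. 1 / (bl mu)$i) ** transpose Q" unfolding Cinv_def by (rule Ci)
  have BBi: "B \<bullet> Binv = (\<Sum>k\<in>UNIV. \<Sum>l\<in>UNIV. A k l * (lam$k / ?bl k))"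
  proof -
    have "B \<bullet> Binv = (\<Sum>l\<in>UNIV. (1 / ?bl l) * (\<Sum>k\<in>UNIV. lam$k * (if k = l then 1 else 0)))"
      unfolding Binv_eq Bd frob PP by simp
    also have "\<dots> = (\<Sum>k\<in>UNIV. lam$k / ?bl k)" by (simp add: if_distrib cong: if_cong)
    also have "\<dots> = (\<Sum>k\<in>UNIV. \<Sum>l\<in>UNIV. A k l * (lam$k / ?bl k))"
      by (simp only: sum_distrib_right[symmetric] Arow mult_1_left)
    finally show ?thesis .
  qed
  have CCi: "C \<bullet> Cinv = (\<Sum>k\<in>UNIV. \<Sum>l\<in>UNIV. A k l * (mu$l / ?bm l))"
  proof -
    have "C \<bullet> Cinv = (\<Sum>l\<in>UNIV. (1 / ?bm l) * (\<Sum>k\<in>UNIV. mu$k * (if k = l then 1 else 0)))"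
      unfolding Cinv_eq Cd frob QQ by simp
    also have "\<dots> = (\<Sum>l\<in>UNIV. mu$l / ?bm l)" by (simp add: if_distrib cong: if_cong)
    also have "\<dots> = (\<Sum>l\<in>UNIV. \<Sum>k\<in>UNIV. A k l * (mu$l / ?bm l))"
      by (simp only: sum_distrib_right[symmetric] Acol mult_1_left)
    also have "\<dots> = (\<Sum>k\<in>UNIV. \<Sum>l\<in>UNIV. A k l * (mu$l / ?bm l))" by (rule sum.swap)
    finally show ?thesis .
  qed
  have BCi: "B \<bullet> Cinv = (\<Sum>k\<in>UNIV. \<Sum>l\<in>UNIV. A k l * (lam$k / ?bm l))"
  proof -
    have "B \<bullet> Cinv = (\<Sum>l\<in>UNIV. (1 / ?bm l) * (\<Sum>k\<in>UNIV. lam$k * A k l))"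
      unfolding Cinv_eq Bd frob AQP by simp
    also have "\<dots> = (\<Sum>l\<in>UNIV. \<Sum>k\<in>UNIV. A k l * (lam$k / ?bm l))"
      by (simp add: sum_distrib_left mult_ac)
    also have "\<dots> = (\<Sum>k\<in>UNIV. \<Sum>l\<in>UNIV. A k l * (lam$k / ?bm l))" by (rule sum.swap)
    finally show ?thesis .
  qed
  have CBi: "C \<bullet> Binv = (\<Sum>k\<in>UNIV. \<Sum>l\<in>UNIV. A k l * (mu$l / ?bl k))"
  proof -
    have "C \<bullet> Binv = (\<Sum>k\<in>UNIV. (1 / ?bl k) * (\<Sum>l\<in>UNIV. mu$l * A k l))"
      unfolding Binv_eq Cd frob APQ by simp
    also have "\<dots> = (\<Sum>k\<in>UNIV. \<Sum>l\<in>UNIV. A k l * (mu$l / ?bl k))"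
      by (simp add: sum_distrib_left mult_ac)
    finally show ?thesis .
  qed
  define g where "g k l = - ((lam$k - mu$l) * (1 / ?bl k - 1 / ?bm l))" for k l
  have negD: "- ((B - C) \<bullet> (Binv - Cinv)) = (\<Sum>k\<in>UNIV. \<Sum>l\<in>UNIV. A k l * g k l)"
  proof -
    have e: "A k l * g k l = A k l * (lam$k / ?bm l) + A k l * (mu$l / ?bl k)
              - A k l * (lam$k / ?bl k) - A k l * (mu$l / ?bm l)" for k l
      by (simp add: g_def algebra_simps)
    have "- ((B - C) \<bullet> (Binv - Cinv)) = B \<bullet> Cinv + C \<bullet> Binv - B \<bullet> Binv - C \<bullet> Cinv"
      by (simp add: inner_diff_left inner_diff_right)
    also have "\<dots> = (\<Sum>k\<in>UNIV. \<Sum>l\<in>UNIV. A k l * g k l)"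
      unfolding BBi CCi BCi CBi e by (simp add: sum.distrib sum_subtractf)
    finally show ?thesis .
  qed
  define h where "h k l = ln (?bl k) - ln (?bm l)" for k l
  have T: "trace (mat_fun ln (mat_fun (beta \<delta>) B)) - trace (mat_fun ln (mat_fun (beta \<delta>) C))
        = (\<Sum>k\<in>UNIV. \<Sum>l\<in>UNIV. A k l * h k l)"
  proof -
    have 1: "(\<Sum>k\<in>UNIV. ln (?bl k)) = (\<Sum>k\<in>UNIV. \<Sum>l\<in>UNIV. A k l * ln (?bl k))"
      by (simp only: sum_distrib_right[symmetric] Arow mult_1_left)
    have "(\<Sum>l\<in>UNIV. ln (?bm l)) = (\<Sum>l\<in>UNIV. \<Sum>k\<in>UNIV. A k l * ln (?bm l))"
      by (simp only: sum_distrib_right[symmetric] Acol mult_1_left)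
    also have "\<dots> = (\<Sum>k\<in>UNIV. \<Sum>l\<in>UNIV. A k l * ln (?bm l))" by (rule sum.swap)
    finally have 2: "(\<Sum>l\<in>UNIV. ln (?bm l)) = \<dots>" .
    show ?thesis unfolding tB tC 1 2 h_def by (simp add: sum_subtractf right_diff_distrib)
  qed
  have gh: "(h k l)^2 \<le> g k l" for k l
    using scalar_ineq[OF d, of "lam$k" "mu$l"] by (simp add: h_def g_def bl_def)
  let ?U = "UNIV \<times> (UNIV :: 'n set)"
  have dsum: "(\<Sum>k\<in>UNIV. \<Sum>l\<in>UNIV. f k l) = (\<Sum>p\<in>?U. f (fst p) (snd p))" for f :: "'n \<Rightarrow> 'n \<Rightarrow> real"
    by (simp add: sum.cartesian_product case_prod_beta)
  have "(\<Sum>k\<in>UNIV. \<Sum>l\<in>UNIV. A k l * h k l)^2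
        \<le> (\<Sum>k\<in>UNIV. \<Sum>l\<in>UNIV. A k l) * (\<Sum>k\<in>UNIV. \<Sum>l\<in>UNIV. A k l * (h k l)^2)"
    unfolding dsum by (rule wcs) (simp add: A0)
  also have "(\<Sum>k\<in>UNIV. \<Sum>l\<in>UNIV. A k l) = real CARD('n)" by (simp add: Arow)
  also have "(\<Sum>k\<in>UNIV. \<Sum>l\<in>UNIV. A k l * (h k l)^2) \<le> (\<Sum>k\<in>UNIV. \<Sum>l\<in>UNIV. A k l * g k l)"
    by (intro sum_mono mult_left_mono gh A0)
  hence "real CARD('n) * (\<Sum>k\<in>UNIV. \<Sum>l\<in>UNIV. A k l * (h k l)^2)
        \<le> real CARD('n) * (\<Sum>k\<in>UNIV. \<Sum>l\<in>UNIV. A k l * g k l)"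
    by (simp add: mult_left_mono)
  finally have "(\<Sum>k\<in>UNIV. \<Sum>l\<in>UNIV. A k l * h k l)^2 \<le> real CARD('n) * (- ((B - C) \<bullet> (Binv - Cinv)))"
    using negD by simp
  thus ?thesis unfolding T Binv_def Cinv_def by (simp add: divide_le_eq mult.commute)
qed

lemma span_E:
  fixes v :: "nat \<Rightarrow> real^'n"
  assumes inj: "inj_on v {0..CARD('n)}" and ind: "\<not> affine_dependent (v ` {0..CARD('n)})"
  shows "independent ((\<lambda>l. v l - v 0) ` {1..CARD('n)})"
    "inj_on (\<lambda>l. v l - v 0) {1..CARD('n)}"
    "span ((\<lambda>l. v l - v 0) ` {1..CARD('n)}) = UNIV"
proof -
  let ?E = "(\<lambda>l. v l - v 0) ` {1..CARD('n)}"
  have nin: "v 0 \<notin> v ` {1..CARD('n)}"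
  proof
    assume "v 0 \<in> v ` {1..CARD('n)}"
    then obtain x where x: "x \<in> {1..CARD('n)}" "v 0 = v x" by auto
    hence "0 = x" using inj_onD[OF inj x(2)] by auto
    thus False using x(1) by simp
  qed
  have "{0..CARD('n)} = insert 0 {1..CARD('n)}" by auto
  hence "v ` {0..CARD('n)} = insert (v 0) (v ` {1..CARD('n)})" by auto
  hence "\<not> dependent ((+) (- v 0) ` v ` {1..CARD('n)})"
    using ind affine_dependent_iff_dependent[OF nin] by simp
  moreover have "(+) (- v 0) ` v ` {1..CARD('n)} = ?E" by (auto simp: image_image)
  ultimately show indE: "independent ?E" by simp
  show injE: "inj_on (\<lambda>l. v l - v 0) {1..CARD('n)}"
    using inj by (auto simp: inj_on_def)
  have "card ?E = CARD('n)" using card_image[OF injE] by simp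
  hence "dim (span ?E) = DIM(real^'n)" using indep_card_eq_dim_span[OF indE] by simp
  thus "span ?E = UNIV" using dim_eq_full[of "span ?E"] by (simp only: span_span)
qed

lemma dual_exists:
  fixes v :: "nat \<Rightarrow> real^'n"
  assumes inj: "inj_on v {0..CARD('n)}" and ind: "\<not> affine_dependent (v ` {0..CARD('n)})"
  shows "\<exists>w. \<forall>l\<in>{1..CARD('n)}. \<forall>m\<in>{1..CARD('n)}. w l \<bullet> (v m - v 0) = (if l = m then 1 else 0)"
proof -
  let ?E = "(\<lambda>l. v l - v 0) ` {1..CARD('n)}"
  note E = span_E[OF inj ind]
  have "\<forall>l\<in>{1..CARD('n)}. \<exists>wl. \<forall>m\<in>{1..CARD('n)}. wl \<bullet> (v m - v 0) = (if l = m then 1 else 0)"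
  proof
    fix l assume l: "l \<in> {1..CARD('n)}"
    obtain g where g: "linear g" "\<forall>x\<in>?E. g x = (if x = v l - v 0 then 1 else (0::real))"
      using linear_independent_extend[OF E(1), of "\<lambda>x. if x = v l - v 0 then 1 else (0::real)"] by blast
    have "\<forall>m\<in>{1..CARD('n)}. adjoint g 1 \<bullet> (v m - v 0) = (if l = m then 1 else 0)"
    proof
      fix m assume m: "m \<in> {1..CARD('n)}"
      have "adjoint g 1 \<bullet> (v m - v 0) = (v m - v 0) \<bullet> adjoint g 1" by (rule inner_commute)
      also have "\<dots> = g (v m - v 0) \<bullet> 1" by (rule adjoint_works[OF g(1)])
      also have "\<dots> = g (v m - v 0)" by simp
      also have "\<dots> = (if v m - v 0 = v l - v 0 then 1 else 0)" using g(2) m by blast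
      also have "\<dots> = (if l = m then 1 else 0)"
      proof -
        have "(v m - v 0 = v l - v 0) = (l = m)"
        proof
          assume "v m - v 0 = v l - v 0"
          thus "l = m" using inj_onD[OF E(2), of m l] m l by simp
        qed simp
        thus ?thesis by simp
      qed
      finally show "adjoint g 1 \<bullet> (v m - v 0) = (if l = m then 1 else 0)" .
    qed
    thus "\<exists>wl. \<forall>m\<in>{1..CARD('n)}. wl \<bullet> (v m - v 0) = (if l = m then 1 else 0)" by blast
  qed
  from bchoice[OF this] show ?thesis by blast
qed

lemma expand_E:
  fixes v :: "nat \<Rightarrow> real^'n"
  assumes inj: "inj_on v {0..CARD('n)}" and ind: "\<not> affine_dependent (v ` {0..CARD('n)})"
    and w: "\<forall>l\<in>{1..CARD('n)}. \<forall>m\<in>{1..CARD('n)}. w l \<bullet> (v m - v 0) = (if l = m then 1 else 0)"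
  shows "(\<Sum>l\<in>{1..CARD('n)}. (w l \<bullet> y) *\<^sub>R (v l - v 0)) = y"
proof -
  let ?E = "(\<lambda>l. v l - v 0) ` {1..CARD('n)}"
  note E = span_E[OF inj ind]
  have "y \<in> span ?E" using E(3) by simp
  then obtain c where c: "y = (\<Sum>e\<in>?E. c e *\<^sub>R e)" using span_finite[of ?E] by auto
  hence y: "y = (\<Sum>l\<in>{1..CARD('n)}. c (v l - v 0) *\<^sub>R (v l - v 0))"
    by (simp only: sum.reindex[OF E(2)] o_def)
  have "w m \<bullet> y = c (v m - v 0)" if m: "m \<in> {1..CARD('n)}" for m
  proof -
    have "w m \<bullet> y = (\<Sum>l\<in>{1..CARD('n)}. c (v l - v 0) * (w m \<bullet> (v l - v 0)))"
      by (subst y) (simp add: inner_sum_right)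
    also have "\<dots> = (\<Sum>l\<in>{1..CARD('n)}. if l = m then c (v m - v 0) else 0)"
      using w m by (intro sum.cong) auto
    also have "\<dots> = c (v m - v 0)" using m by simp
    finally show ?thesis .
  qed
  hence "(\<Sum>l\<in>{1..CARD('n)}. (w l \<bullet> y) *\<^sub>R (v l - v 0)) = (\<Sum>l\<in>{1..CARD('n)}. c (v l - v 0) *\<^sub>R (v l - v 0))"
    by (intro sum.cong) auto
  thus ?thesis using y by simp
qed

lemma bary_W:
  fixes v :: "nat \<Rightarrow> real^'n"
  assumes inj: "inj_on v {0..CARD('n)}" and ind: "\<not> affine_dependent (v ` {0..CARD('n)})"
  shows "\<exists>W. (\<forall>i\<in>{0..CARD('n)}. \<forall>m\<in>{0..CARD('n)}.
                 W i \<bullet> (v m - v 0) = (if i = m then 1 else 0) - (if i = 0 then 1 else 0))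
           \<and> (\<Sum>i\<in>{0..CARD('n)}. W i) = 0
           \<and> (\<forall>x i. bary v x i = (if i \<in> {0..CARD('n)} then W i \<bullet> (x - v 0) + (if i = 0 then 1 else 0) else 0))"
proof -
  let ?I = "{0..CARD('n)}" and ?J = "{1..CARD('n)}"
  obtain w where w: "\<forall>l\<in>?J. \<forall>m\<in>?J. w l \<bullet> (v m - v 0) = (if l = m then 1 else 0)"
    using dual_exists[OF inj ind] by blast
  define W where "W i = (if i = 0 then - (\<Sum>l\<in>?J. w l) else w i)" for i
  have IJ: "?I = insert 0 ?J" by auto
  have W1: "\<forall>i\<in>?I. \<forall>m\<in>?I. W i \<bullet> (v m - v 0) = (if i = m then 1 else 0) - (if i = 0 then 1 else 0)"
  proof (intro ballI)
    fix i m assume i: "i \<in> ?I" and m: "m \<in> ?I"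
    show "W i \<bullet> (v m - v 0) = (if i = m then 1 else 0) - (if i = 0 then 1 else 0)"
    proof (cases "i = 0")
      case True
      show ?thesis
      proof (cases "m = 0")
        case True thus ?thesis using \<open>i = 0\<close> by simp
      next
        case False
        hence mJ: "m \<in> ?J" using m by auto
        have "W i \<bullet> (v m - v 0) = - (\<Sum>l\<in>?J. w l \<bullet> (v m - v 0))"
          using True by (simp add: W_def inner_sum_left)
        also have "\<dots> = - (\<Sum>l\<in>?J. if l = m then 1 else 0)" using w mJ by simp
        also have "\<dots> = -1" using mJ by simp
        finally show ?thesis using True False by simp
      qed
    next
      case False
      hence iJ: "i \<in> ?J" using i by auto
      show ?thesis
      proof (cases "m = 0")
        case True thus ?thesis using False by simp
      next
        case False
        hence mJ: "m \<in> ?J" using m by auto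
        thus ?thesis using w iJ \<open>i \<noteq> 0\<close> by (simp add: W_def)
      qed
    qed
  qed
  have W2: "(\<Sum>i\<in>?I. W i) = 0"
  proof -
    have "(\<Sum>i\<in>?I. W i) = W 0 + (\<Sum>i\<in>?J. W i)" unfolding IJ by (subst sum.insert) auto
    also have "(\<Sum>i\<in>?J. W i) = (\<Sum>i\<in>?J. w i)" by (intro sum.cong) (auto simp: W_def)
    finally show ?thesis by (simp add: W_def)
  qed
  have W3: "bary v x = (\<lambda>i. if i \<in> ?I then W i \<bullet> (x - v 0) + (if i = 0 then 1 else 0) else 0)" for x
  proof -
    define u where "u = (\<lambda>i. if i \<in> ?I then W i \<bullet> (x - v 0) + (if i = 0 then 1 else 0) else (0::real))"
    have P1: "\<forall>i. CARD('n) < i \<longrightarrow> u i = 0" by (simp add: u_def)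
    have su: "sum u ?I = 1"
    proof -
      have "sum u ?I = (\<Sum>i\<in>?I. W i \<bullet> (x - v 0)) + (\<Sum>i\<in>?I. (if i = 0 then 1 else 0))"
        by (simp add: u_def sum.distrib)
      also have "(\<Sum>i\<in>?I. W i \<bullet> (x - v 0)) = 0" using W2 by (simp add: inner_sum_left[symmetric])
      also have "(\<Sum>i\<in>?I. (if i = 0 then 1 else 0)) = (1::real)" by simp
      finally show ?thesis by simp
    qed
    have sv: "(\<Sum>i\<in>?I. u i *\<^sub>R v i) = x"
    proof -
      have "(\<Sum>i\<in>?I. u i *\<^sub>R v i) = (\<Sum>i\<in>?I. u i *\<^sub>R (v i - v 0)) + (sum u ?I) *\<^sub>R v 0"
        by (simp add: scaleR_diff_right sum_subtractf scaleR_sum_left)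
      also have "(\<Sum>i\<in>?I. u i *\<^sub>R (v i - v 0)) = (\<Sum>i\<in>?J. u i *\<^sub>R (v i - v 0))"
        unfolding IJ by (subst sum.insert) auto
      also have "\<dots> = (\<Sum>l\<in>?J. (w l \<bullet> (x - v 0)) *\<^sub>R (v l - v 0))"
        by (intro sum.cong) (auto simp: u_def W_def)
      also have "\<dots> = x - v 0" by (rule expand_E[OF inj ind w])
      finally show ?thesis using su by simp
    qed
    have uniq: "u' = u" if u': "(\<forall>i. CARD('n) < i \<longrightarrow> u' i = 0) \<and> sum u' ?I = 1 \<and> (\<Sum>i\<in>?I. u' i *\<^sub>R v i) = x" for u'
    proof
      fix m
      show "u' m = u m"
      proof (cases "m \<in> ?I")
        case False thus ?thesis using u' by (simp add: u_def)
      next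
        case True
        have ue: "(\<Sum>i\<in>?I. u' i *\<^sub>R (v i - v 0)) = x - v 0"
          using u' by (simp add: scaleR_diff_right sum_subtractf scaleR_sum_left[symmetric])
        have "W m \<bullet> (x - v 0) = W m \<bullet> (\<Sum>i\<in>?I. u' i *\<^sub>R (v i - v 0))" by (simp only: ue)
        also have "\<dots> = (\<Sum>i\<in>?I. u' i * (W m \<bullet> (v i - v 0)))"
          by (simp add: inner_sum_right)
        also have "\<dots> = (\<Sum>i\<in>?I. u' i * ((if m = i then 1 else 0) - (if m = 0 then 1 else 0)))"
          using W1 True by (intro sum.cong) auto
        also have "\<dots> = u' m - (if m = 0 then 1 else 0)"
        proof -
          have e: "\<And>i. u' i * ((if m = i then 1 else 0) - (if m = 0 then 1 else 0))
                 = (if i = m then u' m else 0) - u' i * (if m = 0 then 1 else 0)" by auto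
          show ?thesis using True u' by (simp only: e sum_subtractf sum_distrib_right[symmetric]) simp
        qed
        finally show ?thesis using True by (simp add: u_def)
      qed
    qed
    have "bary v x = u"
      unfolding bary_def
    proof (rule the_equality)
      show "(\<forall>i. CARD('n) < i \<longrightarrow> u i = 0) \<and> sum u ?I = 1 \<and> (\<Sum>i\<in>?I. u i *\<^sub>R v i) = x"
        using P1 su sv by blast
    next
      fix u' assume "(\<forall>i. CARD('n) < i \<longrightarrow> u' i = 0) \<and> sum u' ?I = 1 \<and> (\<Sum>i\<in>?I. u' i *\<^sub>R v i) = x"
      thus "u' = u" by (rule uniq)
    qed
    thus ?thesis by (simp add: u_def)
  qed
  have W3': "\<forall>x i. bary v x i = (if i \<in> ?I then W i \<bullet> (x - v 0) + (if i = 0 then 1 else 0) else 0)"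
    using W3 by simp
  show ?thesis by (rule exI[of _ W], intro conjI, fact W1, fact W2, fact W3')
qed

lemma W_diff:
  assumes W1: "\<forall>i\<in>I. \<forall>m\<in>I. W i \<bullet> (v m - v 0) = (if i = m then 1 else 0) - (if i = 0 then 1 else 0)"
   and "i \<in> I" "m \<in> I" "n \<in> I"
  shows "W i \<bullet> (v m - v n) = (if i = m then 1 else 0) - (if i = n then 1 else (0::real))"
proof -
  have "v m - v n = (v m - v 0) - (v n - v 0)" by simp
  hence "W i \<bullet> (v m - v n) = W i \<bullet> (v m - v 0) - W i \<bullet> (v n - v 0)" by (simp add: inner_diff_right)
  thus ?thesis using W1 assms(2-4) by simp
qed

lemma W_obtuse:
  fixes v :: "nat \<Rightarrow> real^'n"
  assumes inj: "inj_on v {0..CARD('n)}" and ind: "\<not> affine_dependent (v ` {0..CARD('n)})"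
    and d2: "CARD('n) \<ge> 2" and no: "nonobtuse_simplex v"
    and W1: "\<forall>i\<in>{0..CARD('n)}. \<forall>m\<in>{0..CARD('n)}. W i \<bullet> (v m - v 0) = (if i = m then 1 else 0) - (if i = 0 then 1 else 0)"
    and i: "i \<in> {0..CARD('n)}" and j: "j \<in> {0..CARD('n)}" and ij: "i \<noteq> j"
  shows "W i \<bullet> W j \<le> 0"
proof -
  let ?I = "{0..CARD('n)}"
  define R where "R = ?I - {i, j}"
  define k where "k = Min R"
  define S where "S = span ((\<lambda>l. v l - v k) ` R)"
  define wi where "wi = (v i - v k) - closest_point S (v i - v k)"
  define wj where "wj = (v j - v k) - closest_point S (v j - v k)"
  have Rne: "R \<noteq> {}"
  proof
    assume "R = {}" hence "?I \<subseteq> {i,j}" by (auto simp: R_def)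
    hence "card ?I \<le> card {i,j}" by (intro card_mono) auto
    moreover have "card {i,j} = 2" using ij by simp
    moreover have "card ?I = CARD('n) + 1" by simp
    ultimately show False using d2 by simp
  qed
  have kR: "k \<in> R" using Rne unfolding k_def by (intro Min_in) (auto simp: R_def)
  hence kI: "k \<in> ?I" "k \<noteq> i" "k \<noteq> j" by (auto simp: R_def)
  have Ssub: "subspace S" by (simp add: S_def)
  have Sc: "closed S" "convex S" "S \<noteq> {}"
    using Ssub span_zero[of "(\<lambda>l. v l - v k) ` R"] by (auto simp: S_def subspace_imp_convex)
  have pS: "closest_point S z \<in> S" for z by (rule closest_point_in_set[OF Sc(1) Sc(3)])
  have porth: "(z - closest_point S z) \<bullet> y = 0" if y: "y \<in> S" for z y
  proof -
    let ?p = "closest_point S z"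
    have "?p + y \<in> S" "?p - y \<in> S" using pS y Ssub by (auto intro: subspace_add subspace_diff)
    hence "(z - ?p) \<bullet> (?p + y - ?p) \<le> 0" "(z - ?p) \<bullet> (?p - y - ?p) \<le> 0"
      using closest_point_dot[OF Sc(2) Sc(1)] by blast+
    thus ?thesis by simp
  qed
  have WS: "W a \<bullet> y = 0" if a: "a \<in> {i,j}" and y: "y \<in> S" for a y
  proof -
    have sub: "subspace {y. W a \<bullet> y = 0}" unfolding subspace_def by (simp add: inner_add_right)
    have gen: "W a \<bullet> g = 0" if gR: "g \<in> (\<lambda>l. v l - v k) ` R" for g
    proof -
      obtain l where l: "l \<in> R" "g = v l - v k" using gR by auto
      have "a \<in> ?I" using a i j by auto
      moreover have "l \<in> ?I" "a \<noteq> l" using l(1) a by (auto simp: R_def)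
      moreover have "a \<noteq> k" using a kI by auto
      ultimately show ?thesis using W_diff[OF W1, of a l k] kI l(2) by simp
    qed
    show ?thesis using span_induct[of y _ "\<lambda>y. W a \<bullet> y = 0", OF y[unfolded S_def] sub] gen by blast
  qed
  have Wi_wi: "W i \<bullet> wi = 1"
    using W_diff[OF W1 i i kI(1)] WS[OF _ pS, of i] kI by (simp add: wi_def inner_diff_right)
  have Wi_wj: "W i \<bullet> wj = 0"
    using W_diff[OF W1 i j kI(1)] WS[OF _ pS, of i] kI ij by (simp add: wj_def inner_diff_right)
  have Wj_wj: "W j \<bullet> wj = 1"
    using W_diff[OF W1 j j kI(1)] WS[OF _ pS, of j] kI by (simp add: wj_def inner_diff_right)
  have Wj_wi: "W j \<bullet> wi = 0"
    using W_diff[OF W1 j i kI(1)] WS[OF _ pS, of j] kI ij by (simp add: wi_def inner_diff_right)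
  have wiS: "wi \<bullet> y = 0" if "y \<in> S" for y using porth[OF that] by (simp add: wi_def)
  have wjS: "wj \<bullet> y = 0" if "y \<in> S" for y using porth[OF that] by (simp add: wj_def)
  have zero: "z = 0" if z: "\<forall>y\<in>S. z \<bullet> y = 0" "z \<bullet> wi = 0" "z \<bullet> wj = 0" for z
  proof -
    have a: "z \<bullet> (v l - v k) = 0" if l: "l \<in> ?I" for l
    proof (cases "l \<in> R")
      case True
      hence "v l - v k \<in> S" by (simp add: S_def span_base)
      thus ?thesis using z by blast
    next
      case False
      hence "l = i \<or> l = j" using l by (auto simp: R_def)
      thus ?thesis
      proof
        assume "l = i"
        hence "v l - v k = wi + closest_point S (v i - v k)" by (simp add: wi_def)
        thus ?thesis using z pS by (simp add: inner_add_right)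
      next
        assume "l = j"
        hence "v l - v k = wj + closest_point S (v j - v k)" by (simp add: wj_def)
        thus ?thesis using z pS by (simp add: inner_add_right)
      qed
    qed
    have b: "z \<bullet> (v l - v 0) = 0" if "l \<in> {1..CARD('n)}" for l
    proof -
      have "v l - v 0 = (v l - v k) - (v 0 - v k)" by simp
      hence "z \<bullet> (v l - v 0) = z \<bullet> (v l - v k) - z \<bullet> (v 0 - v k)" by (simp add: inner_diff_right)
      thus ?thesis using a[of l] a[of 0] that by simp
    qed
    have zs: "z \<in> span ((\<lambda>l. v l - v 0) ` {1..CARD('n)})" using span_E(3)[OF inj ind] by simp
    have sub: "subspace {y. z \<bullet> y = 0}" unfolding subspace_def by (simp add: inner_add_right)
    have "z \<bullet> z = 0" using span_induct[of z _ "\<lambda>y. z \<bullet> y = 0", OF zs sub] b by blast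
    thus ?thesis by simp
  qed
  define c where "c = wi \<bullet> wj"
  define b where "b = wj \<bullet> wj"
  have "wj - c *\<^sub>R W i - b *\<^sub>R W j = 0"
  proof (rule zero)
    show "\<forall>y\<in>S. (wj - c *\<^sub>R W i - b *\<^sub>R W j) \<bullet> y = 0"
      using wjS WS by (simp add: inner_diff_left)
    have cc: "wj \<bullet> wi = c" unfolding c_def by (rule inner_commute)
    have "(wj - c *\<^sub>R W i - b *\<^sub>R W j) \<bullet> wi = wj \<bullet> wi - c * (W i \<bullet> wi) - b * (W j \<bullet> wi)"
      by (simp add: inner_diff_left)
    thus "(wj - c *\<^sub>R W i - b *\<^sub>R W j) \<bullet> wi = 0" using Wi_wi Wj_wi cc by simp
    show "(wj - c *\<^sub>R W i - b *\<^sub>R W j) \<bullet> wj = 0"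
      using Wi_wj Wj_wj by (simp add: inner_diff_left b_def)
  qed
  hence wjeq: "wj = c *\<^sub>R W i + b *\<^sub>R W j" by (simp add: algebra_simps)
  have key: "c * (W i \<bullet> W i) + b * (W i \<bullet> W j) = 0"
    using Wi_wj unfolding wjeq by (simp add: inner_add_right)
  have wi0: "wi \<noteq> 0" using Wi_wi by auto
  have wj0: "wj \<noteq> 0" using Wj_wj by auto
  have bpos: "b > 0" using wj0 by (simp add: b_def)
  have c0: "c \<ge> 0"
  proof (rule ccontr)
    assume "\<not> c \<ge> 0"
    hence cn: "c < 0" by simp
    define r where "r = c / (norm wi * norm wj)"
    have np: "norm wi * norm wj > 0" using wi0 wj0 by simp
    have "\<bar>c\<bar> \<le> norm wi * norm wj" unfolding c_def by (rule Cauchy_Schwarz_ineq2)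
    hence "\<bar>r\<bar> \<le> 1" using np by (simp add: r_def abs_divide divide_le_eq_1)
    moreover have "r < 0" using cn np by (simp add: r_def divide_neg_pos)
    ultimately have "arccos 0 < arccos r" by (intro arccos_less_arccos) auto
    hence "pi / 2 < arccos r" by simp
    moreover have "dihedral_angle v i j = arccos r"
      by (simp add: dihedral_angle_def Let_def R_def k_def S_def wi_def wj_def c_def r_def)
    moreover have "dihedral_angle v i j \<le> pi / 2"
      using no i j ij by (simp add: nonobtuse_simplex_def)
    ultimately show False by simp
  qed
  have "b * (W i \<bullet> W j) = - c * (W i \<bullet> W i)" using key by simp
  also have "\<dots> \<le> 0" using c0 by (simp add: mult_nonneg_nonneg)
  finally show ?thesis using bpos by (simp add: mult_le_0_iff)
qed

lemma pd_formula:
  fixes v :: "nat \<Rightarrow> real^'n" and g :: "nat \<Rightarrow> 'b::real_normed_vector"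
  assumes W3: "\<forall>x i. bary v x i = (if i \<in> {0..CARD('n)} then W i \<bullet> (x - v 0) + (if i = 0 then 1 else 0) else 0)"
  shows "pd (p1_interp v g) x k = (\<Sum>i\<in>{0..CARD('n)}. (W i $ k) *\<^sub>R g i)"
proof -
  let ?I = "{0..CARD('n)}"
  have pe: "p1_interp v g = (\<lambda>x. \<Sum>i\<in>?I. (W i \<bullet> (x - v 0) + (if i = 0 then 1 else 0)) *\<^sub>R g i)"
    unfolding p1_interp_def by (intro ext sum.cong) (auto simp: W3)
  have der: "((\<lambda>x. \<Sum>i\<in>?I. (W i \<bullet> (x - v 0) + (if i = 0 then 1 else 0)) *\<^sub>R g i)
              has_derivative (\<lambda>h. \<Sum>i\<in>?I. (W i \<bullet> h) *\<^sub>R g i)) (at x)"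
    by (auto intro!: derivative_eq_intros)
  have "frechet_derivative (p1_interp v g) (at x) = (\<lambda>h. \<Sum>i\<in>?I. (W i \<bullet> h) *\<^sub>R g i)"
    using frechet_derivative_at[OF der] pe by simp
  thus ?thesis by (simp add: pd_def inner_axis)
qed

lemma integrand_eq:
  fixes f h :: "nat \<Rightarrow> 'b::real_inner" and W :: "nat \<Rightarrow> real^'n"
  shows "(\<Sum>k\<in>UNIV. (\<Sum>i\<in>I. (W i $ k) *\<^sub>R f i) \<bullet> (\<Sum>j\<in>I. (W j $ k) *\<^sub>R h j))
        = (\<Sum>i\<in>I. \<Sum>j\<in>I. (W i \<bullet> W j) * (f i \<bullet> h j))"
proof -
  have "(\<Sum>k\<in>UNIV. (\<Sum>i\<in>I. (W i $ k) *\<^sub>R f i) \<bullet> (\<Sum>j\<in>I. (W j $ k) *\<^sub>R h j))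
      = (\<Sum>k\<in>UNIV. \<Sum>j\<in>I. \<Sum>i\<in>I. (W i $ k * W j $ k) * (f i \<bullet> h j))"
    by (simp add: inner_sum_left inner_sum_right sum_distrib_left) (simp add: mult_ac)
  also have "\<dots> = (\<Sum>j\<in>I. \<Sum>i\<in>I. \<Sum>k\<in>UNIV. (W i $ k * W j $ k) * (f i \<bullet> h j))"
    by (rule sum3_swap[symmetric])
  also have "\<dots> = (\<Sum>j\<in>I. \<Sum>i\<in>I. (W i \<bullet> W j) * (f i \<bullet> h j))"
    by (simp add: inner_vec_def sum_distrib_right)
  also have "\<dots> = (\<Sum>i\<in>I. \<Sum>j\<in>I. (W i \<bullet> W j) * (f i \<bullet> h j))"
    by (rule sum.swap)
  finally show ?thesis .
qed

lemma sym_sum: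
  fixes G h :: "nat \<Rightarrow> nat \<Rightarrow> real"
  assumes Gs: "\<And>i j. G i j = G j i" and rs: "\<And>i. i \<in> I \<Longrightarrow> (\<Sum>j\<in>I. G i j) = 0"
  shows "(\<Sum>i\<in>I. \<Sum>j\<in>I. G i j * (h i i - h i j - h j i + h j j)) = -2 * (\<Sum>i\<in>I. \<Sum>j\<in>I. G i j * h i j)"
proof -
  have a: "(\<Sum>i\<in>I. \<Sum>j\<in>I. G i j * h i i) = 0"
  proof -
    have "(\<Sum>i\<in>I. \<Sum>j\<in>I. G i j * h i i) = (\<Sum>i\<in>I. (\<Sum>j\<in>I. G i j) * h i i)"
      by (simp add: sum_distrib_right)
    also have "\<dots> = 0" using rs by simp
    finally show ?thesis .
  qed
  have b: "(\<Sum>i\<in>I. \<Sum>j\<in>I. G i j * h j j) = 0"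
  proof -
    have "(\<Sum>i\<in>I. \<Sum>j\<in>I. G i j * h j j) = (\<Sum>j\<in>I. \<Sum>i\<in>I. G i j * h j j)" by (rule sum.swap)
    also have "\<dots> = (\<Sum>j\<in>I. (\<Sum>i\<in>I. G j i) * h j j)"
      by (simp add: sum_distrib_right Gs)
    also have "\<dots> = 0" using rs by simp
    finally show ?thesis .
  qed
  have c: "(\<Sum>i\<in>I. \<Sum>j\<in>I. G i j * h j i) = (\<Sum>i\<in>I. \<Sum>j\<in>I. G i j * h i j)"
  proof -
    have "(\<Sum>i\<in>I. \<Sum>j\<in>I. G i j * h j i) = (\<Sum>j\<in>I. \<Sum>i\<in>I. G i j * h j i)" by (rule sum.swap)
    also have "\<dots> = (\<Sum>j\<in>I. \<Sum>i\<in>I. G j i * h j i)" by (simp add: Gs)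
    finally show ?thesis .
  qed
  have "(\<Sum>i\<in>I. \<Sum>j\<in>I. G i j * (h i i - h i j - h j i + h j j))
      = (\<Sum>i\<in>I. \<Sum>j\<in>I. G i j * h i i) - (\<Sum>i\<in>I. \<Sum>j\<in>I. G i j * h i j)
        - (\<Sum>i\<in>I. \<Sum>j\<in>I. G i j * h j i) + (\<Sum>i\<in>I. \<Sum>j\<in>I. G i j * h j j)"
    by (simp add: algebra_simps sum.distrib sum_subtractf)
  thus ?thesis using a b c by simp
qed

lemma trace_ln_inv:
  fixes B :: "real^'n^'n"
  assumes sB: "transpose B = B" and d: "\<delta> > 0"
  shows "trace (mat_fun ln (matrix_inv (mat_fun (beta \<delta>) B))) = - trace (mat_fun ln (mat_fun (beta \<delta>) B))"
proof -
  define bl where "bl lam = (\<chi> i. beta \<delta> (lam$i))" for lam :: "real^'n"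
  obtain P lam where P: "orthogonal_matrix P"
     and bB: "mat_fun (beta \<delta>) B = P ** diag_mat (bl lam) ** transpose P"
    using mf_spec[OF sB, of "beta \<delta>"] unfolding bl_def by blast
  have blp: "(bl x)$k > 0" for x k using d by (simp add: bl_def beta_def)
  have Bi: "matrix_inv (mat_fun (beta \<delta>) B) = P ** diag_mat (\<chi> i. 1 / (bl lam)$i) ** transpose P"
    unfolding bB by (rule qdq_inv[OF P]) (simp add: blp less_imp_neq[symmetric])
  have p2: "(\<chi> i. 1 / (bl lam)$i)$k > 0" for k using blp by simp
  have "trace (mat_fun ln (matrix_inv (mat_fun (beta \<delta>) B))) = (\<Sum>k\<in>UNIV. ln ((\<chi> i. 1 / (bl lam)$i)$k))"
    unfolding Bi by (rule trace_ln[OF P p2])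
  also have "\<dots> = (\<Sum>k\<in>UNIV. - ln ((bl lam)$k))"
  proof (rule sum.cong[OF refl])
    fix k
    have "ln (1 / (bl lam)$k) = ln 1 - ln ((bl lam)$k)" by (simp add: ln_inverse inverse_eq_divide[symmetric])
    thus "ln ((\<chi> i. 1 / (bl lam)$i)$k) = - ln ((bl lam)$k)" by simp
  qed
  also have "\<dots> = - (\<Sum>k\<in>UNIV. ln ((bl lam)$k))" by (simp add: sum_negf)
  also have "(\<Sum>k\<in>UNIV. ln ((bl lam)$k)) = trace (mat_fun ln (mat_fun (beta \<delta>) B))"
    unfolding bB by (rule trace_ln[OF P blp, symmetric])
  finally show ?thesis .
qed

theorem lemma2p4:
  fixes v :: "nat \<Rightarrow> real^'n" and Bv :: "nat \<Rightarrow> real^'n^'n" and \<delta> :: real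
  assumes "CARD('n) \<in> {2, 3}"
    and "0 < \<delta>" and "\<delta> < 1"
    and "inj_on v {0..CARD('n)}"
    and "\<not> affine_dependent (v ` {0..CARD('n)})"
    and "nonobtuse_simplex v"
    and "\<forall>i \<le> CARD('n). transpose (Bv i) = Bv i"
  shows "- integral (simplex_hull v)
            (\<lambda>x. \<Sum>k\<in>UNIV. pd (p1_interp v Bv) x k \<bullet>
                 pd (p1_interp v (\<lambda>i. matrix_inv (mat_fun (beta \<delta>) (Bv i)))) x k)
          \<ge> 1 / real CARD('n) * integral (simplex_hull v)
            (\<lambda>x. \<Sum>k\<in>UNIV. (pd (p1_interp v (\<lambda>i. trace (mat_fun ln (mat_fun (beta \<delta>) (Bv i))))) x k)\<^sup>2)
       \<and> 1 / real CARD('n) * integral (simplex_hull v)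
            (\<lambda>x. \<Sum>k\<in>UNIV. (pd (p1_interp v (\<lambda>i. trace (mat_fun ln (mat_fun (beta \<delta>) (Bv i))))) x k)\<^sup>2)
         = 1 / real CARD('n) * integral (simplex_hull v)
            (\<lambda>x. \<Sum>k\<in>UNIV. (pd (p1_interp v (\<lambda>i. trace (mat_fun ln (matrix_inv (mat_fun (beta \<delta>) (Bv i)))))) x k)\<^sup>2)"
proof -
  let ?I = "{0..CARD('n)}"
  let ?K = "simplex_hull v"
  define Bi where "Bi = (\<lambda>i. matrix_inv (mat_fun (beta \<delta>) (Bv i)))"
  define t where "t = (\<lambda>i. trace (mat_fun ln (mat_fun (beta \<delta>) (Bv i))))"
  define t' where "t' = (\<lambda>i. trace (mat_fun ln (matrix_inv (mat_fun (beta \<delta>) (Bv i)))))"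
  obtain W where W1: "\<forall>i\<in>?I. \<forall>m\<in>?I. W i \<bullet> (v m - v 0) = (if i = m then 1 else 0) - (if i = 0 then 1 else 0)"
    and W2: "(\<Sum>i\<in>?I. W i) = 0"
    and W3: "\<forall>x i. bary v x i = (if i \<in> ?I then W i \<bullet> (x - v 0) + (if i = 0 then 1 else 0) else 0)"
    using bary_W[OF assms(4) assms(5)] by blast
  have d2: "CARD('n) \<ge> 2" using assms(1) by auto
  have sym: "transpose (Bv i) = Bv i" if "i \<in> ?I" for i using assms(7) that by auto
  define G where "G i j = W i \<bullet> W j" for i j
  have Gs: "G i j = G j i" for i j by (simp add: G_def inner_commute)
  have rs: "(\<Sum>j\<in>?I. G i j) = 0" for i by (simp add: G_def inner_sum_right[symmetric] W2)
  have Gneg: "G i j \<le> 0" if "i \<in> ?I" "j \<in> ?I" "i \<noteq> j" for i j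
    unfolding G_def by (rule W_obtuse[OF assms(4) assms(5) d2 assms(6) W1 that])
  define C1 where "C1 = (\<Sum>i\<in>?I. \<Sum>j\<in>?I. G i j * (Bv i \<bullet> Bi j))"
  define C2 where "C2 = (\<Sum>i\<in>?I. \<Sum>j\<in>?I. G i j * (t i * t j))"
  define m where "m = integral ?K (\<lambda>x. 1::real)"
  have m0: "m \<ge> 0"
  proof (cases "(\<lambda>x. 1::real) integrable_on ?K")
    case True thus ?thesis unfolding m_def by (rule integral_nonneg) simp
  next
    case False thus ?thesis unfolding m_def by (simp add: not_integrable_integral)
  qed
  have int_c: "integral ?K (\<lambda>x. c) = c * m" for c :: real
    using integral_cmul[of ?K c "\<lambda>x. 1::real"] by (simp add: m_def)
  have i1: "(\<lambda>x. \<Sum>k\<in>UNIV. pd (p1_interp v Bv) x k \<bullet> pd (p1_interp v Bi) x k) = (\<lambda>x. C1)"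
    by (rule ext) (simp only: pd_formula[OF W3] integrand_eq C1_def G_def)
  have sq: "(\<Sum>k\<in>UNIV. (pd (p1_interp v g) x k)\<^sup>2) = (\<Sum>i\<in>?I. \<Sum>j\<in>?I. G i j * (g i * g j))" for g :: "nat \<Rightarrow> real" and x
  proof -
    have "(\<Sum>k\<in>UNIV. (pd (p1_interp v g) x k)\<^sup>2) = (\<Sum>k\<in>UNIV. pd (p1_interp v g) x k \<bullet> pd (p1_interp v g) x k)"
      by (simp add: power2_eq_square)
    also have "\<dots> = (\<Sum>i\<in>?I. \<Sum>j\<in>?I. G i j * (g i \<bullet> g j))"
      by (simp only: pd_formula[OF W3] integrand_eq G_def)
    finally show ?thesis by simp
  qed
  have i2: "(\<lambda>x. \<Sum>k\<in>UNIV. (pd (p1_interp v t) x k)\<^sup>2) = (\<lambda>x. C2)"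
    by (rule ext) (simp only: sq C2_def)
  have tt: "t' i = - t i" if "i \<in> ?I" for i
    unfolding t_def t'_def using trace_ln_inv[OF sym[OF that] assms(2)] by simp
  have i3: "(\<lambda>x. \<Sum>k\<in>UNIV. (pd (p1_interp v t') x k)\<^sup>2) = (\<lambda>x. C2)"
  proof (rule ext)
    fix x
    have "(\<Sum>k\<in>UNIV. (pd (p1_interp v t') x k)\<^sup>2) = (\<Sum>i\<in>?I. \<Sum>j\<in>?I. G i j * (t' i * t' j))" by (rule sq)
    also have "\<dots> = C2" unfolding C2_def by (intro sum.cong refl) (simp add: tt)
    finally show "(\<Sum>k\<in>UNIV. (pd (p1_interp v t') x k)\<^sup>2) = C2" .
  qed
  define Dm where "Dm i j = (Bv i - Bv j) \<bullet> (Bi i - Bi j)" for i j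
  have S1: "(\<Sum>i\<in>?I. \<Sum>j\<in>?I. G i j * Dm i j) = -2 * C1"
  proof -
    have "Dm i j = Bv i \<bullet> Bi i - Bv i \<bullet> Bi j - Bv j \<bullet> Bi i + Bv j \<bullet> Bi j" for i j
      by (simp add: Dm_def inner_diff_left inner_diff_right)
    hence "(\<Sum>i\<in>?I. \<Sum>j\<in>?I. G i j * Dm i j)
        = (\<Sum>i\<in>?I. \<Sum>j\<in>?I. G i j * (Bv i \<bullet> Bi i - Bv i \<bullet> Bi j - Bv j \<bullet> Bi i + Bv j \<bullet> Bi j))" by simp
    also have "\<dots> = -2 * C1" unfolding C1_def by (rule sym_sum[OF Gs rs])
    finally show ?thesis .
  qed
  have S2: "(\<Sum>i\<in>?I. \<Sum>j\<in>?I. G i j * (t i - t j)\<^sup>2) = -2 * C2"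
  proof -
    have "(t i - t j)\<^sup>2 = t i * t i - t i * t j - t j * t i + t j * t j" for i j
      by (simp add: power2_eq_square algebra_simps)
    hence "(\<Sum>i\<in>?I. \<Sum>j\<in>?I. G i j * (t i - t j)\<^sup>2)
        = (\<Sum>i\<in>?I. \<Sum>j\<in>?I. G i j * (t i * t i - t i * t j - t j * t i + t j * t j))" by simp
    also have "\<dots> = -2 * C2" unfolding C2_def by (rule sym_sum[OF Gs rs])
    finally show ?thesis .
  qed
  define N where "N = real CARD('n)"
  have Npos: "N > 0" by (simp add: N_def)
  have T: "0 \<le> (\<Sum>i\<in>?I. \<Sum>j\<in>?I. G i j * (Dm i j + (t i - t j)\<^sup>2 / N))"
  proof (intro sum_nonneg)
    fix i j assume i: "i \<in> ?I" and j: "j \<in> ?I"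
    show "0 \<le> G i j * (Dm i j + (t i - t j)\<^sup>2 / N)"
    proof (cases "i = j")
      case True thus ?thesis by (simp add: Dm_def)
    next
      case False
      have "(t i - t j)\<^sup>2 / N \<le> - Dm i j"
        using pair_ineq[OF sym[OF i] sym[OF j] assms(2)] by (simp add: t_def Bi_def Dm_def N_def)
      hence "Dm i j + (t i - t j)\<^sup>2 / N \<le> 0" by simp
      thus ?thesis using Gneg[OF i j False] by (simp add: mult_nonpos_nonpos)
    qed
  qed
  also have "(\<Sum>i\<in>?I. \<Sum>j\<in>?I. G i j * (Dm i j + (t i - t j)\<^sup>2 / N))
      = (\<Sum>i\<in>?I. \<Sum>j\<in>?I. G i j * Dm i j) + (\<Sum>i\<in>?I. \<Sum>j\<in>?I. G i j * (t i - t j)\<^sup>2) / N"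
    by (simp add: distrib_left sum.distrib sum_divide_distrib)
  finally have key: "0 \<le> -2 * C1 + -2 * C2 / N" unfolding S1 S2 by simp
  hence key2: "C2 / N \<le> - C1" by simp
  have conj1: "- (C1 * m) \<ge> 1 / N * (C2 * m)"
  proof -
    have "1 / N * (C2 * m) = (C2 / N) * m" by simp
    also have "\<dots> \<le> (- C1) * m" using key2 m0 by (rule mult_right_mono)
    finally show ?thesis by simp
  qed
  show ?thesis
    unfolding Bi_def[symmetric] t_def[symmetric] t'_def[symmetric]
    unfolding i1 i2 i3 int_c N_def[symmetric]
    using conj1 by simp
qed

end
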